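(* Let $R$ be a ring, $n\ge1$ and $\frac{A}{B}\in\mathcal{F}_n(R)$. There exists a unique pair $(U_1,V_1)$ of polynomials in $R[X]$ with $\deg U_1=n-1$, $\deg V_1\le n-1$ and $AU_1+BV_1=X^{2n-1}$. Let $\phi_n(\frac{A}{B})$ be the opposite of the coefficient of $X^{n-1}$ in $V_1$. Then the resulting scheme morphism $\phi_n:\mathcal{F}_n\to\mathbf{A}^1$ is $\mathbf{G}_a$-equivariant; in particular $\mathcal{F}_n\simeq\phi_n^{-1}(0)\times\mathbf{A}^1$.
   Context: For a ring $R$ and $n\ge1$, $\mathcal{F}_n(R)$ is the set of pairs $(A,B)$, written $\frac{A}{B}$, of polynomials in $R[X]$ with $A$ monic of degree $n$, $\deg B<n$ and $\mathrm{res}_{n,n}(A,B)\in R^\times$; $\mathcal{F}_n$ is the representing scheme (an open subscheme of $\mathbf{A}^{2n}$ over a base field $k$). The additive group $\mathbf{G}_a$ acts on $\mathcal{F}_n$ by $h\cdot\frac{A}{B}=\frac{A+hB}{B}$ and on $\mathbf{A}^1$ by translation. *)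

theory Defs
  imports "Subresultants.Resultant_Prelim"
begin

definition Fn :: "nat \<Rightarrow> ('a::comm_ring_1 poly \<times> 'a poly) set" where
  "Fn n = {(A, B). degree A = n \<and> lead_coeff A = 1 \<and> degree B < n
                  \<and> resultant_sub n n A B dvd 1}"

definition UV_cond :: "nat \<Rightarrow> 'a::comm_ring_1 poly \<Rightarrow> 'a poly \<Rightarrow> 'a poly \<Rightarrow> 'a poly \<Rightarrow> bool" where
  "UV_cond n A B U V \<longleftrightarrow> degree U = n - 1 \<and> degree V \<le> n - 1
                         \<and> A * U + B * V = monom 1 (2 * n - 1)"

definition phi :: "nat \<Rightarrow> ('a::comm_ring_1 poly \<times> 'a poly) \<Rightarrow> 'a" where
  "phi n AB = - coeff (snd (THE UV. UV_cond n (fst AB) (snd AB) (fst UV) (snd UV))) (n - 1)"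

end

theory Submission imports Defs begin
definition vecUV :: "nat \<Rightarrow> 'a::comm_ring_1 poly \<Rightarrow> 'a poly \<Rightarrow> 'a vec" where
  "vecUV n U V = vec (2*n) (\<lambda>i. if i < n then coeff U (n-1-i) else coeff V (2*n-1-i))"

lemma sum_split_nat: "(\<Sum>i<n+m. f i) = (\<Sum>i<n. f i) + (\<Sum>i<m. f (n+i::nat))"
  by (induct m) (auto simp: add.assoc)

lemma coeff_mult_small:
  fixes U A :: "'a::comm_ring_1 poly"
  assumes "degree U < n"
  shows "coeff (A * U) k = (\<Sum>t<n. coeff U t * (if t \<le> k then coeff A (k - t) else 0))"
proof -
  have "coeff (A*U) k = coeff (U*A) k" by (simp add: mult.commute)
  also have "\<dots> = (\<Sum>t\<le>k. coeff U t * coeff A (k - t))" by (rule coeff_mult)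
  also have "\<dots> = (\<Sum>t\<in>{..k} \<union> {..<n}. coeff U t * (if t \<le> k then coeff A (k - t) else 0))"
    by (rule sum.mono_neutral_cong_left) (use assms in \<open>auto simp: coeff_eq_0\<close>)
  also have "\<dots> = (\<Sum>t<n. coeff U t * (if t \<le> k then coeff A (k - t) else 0))"
    by (rule sum.mono_neutral_cong_right) (use assms in \<open>auto simp: coeff_eq_0\<close>)
  finally show ?thesis .
qed

lemma half:
  fixes U A :: "'a::comm_ring_1 poly"
  assumes "degree U < n" "degree A \<le> n" "j < 2*n"
  shows "coeff (A * U) (2*n-1-j) = (\<Sum>i<n. (if i \<le> j \<and> j \<le> n + i then coeff A (n+i-j) else 0) * coeff U (n-1-i))"
proof -
  have "coeff (A * U) (2*n-1-j) = (\<Sum>t<n. coeff U t * (if t \<le> 2*n-1-j then coeff A (2*n-1-j - t) else 0))"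
    by (rule coeff_mult_small[OF assms(1)])
  also have "\<dots> = (\<Sum>i<n. coeff U (n - Suc i) * (if n - Suc i \<le> 2*n-1-j then coeff A (2*n-1-j - (n - Suc i)) else 0))"
    by (rule sum.nat_diff_reindex[symmetric])
  also have "\<dots> = (\<Sum>i<n. (if i \<le> j \<and> j \<le> n + i then coeff A (n+i-j) else 0) * coeff U (n-1-i))"
  proof (rule sum.cong[OF refl])
    fix i assume i: "i \<in> {..<n}"
    show "coeff U (n - Suc i) * (if n - Suc i \<le> 2*n-1-j then coeff A (2*n-1-j - (n - Suc i)) else 0) =
      (if i \<le> j \<and> j \<le> n + i then coeff A (n+i-j) else 0) * coeff U (n-1-i)"
    proof (cases "j < i")
      case True
      then have "coeff A (2*n-1-j - (n - Suc i)) = 0" using i assms by (intro coeff_eq_0) auto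
      then show ?thesis using True by auto
    next
      case False
      have e: "2*n-1-j - (n - Suc i) = n+i-j" using i assms False by auto
      have "(n - Suc i \<le> 2*n-1-j) = (j \<le> n + i)" using i assms by auto
      then show ?thesis using False e by (auto simp: mult.commute)
    qed
  qed
  finally show ?thesis .
qed

lemma corr:
  fixes A B U V :: "'a::comm_ring_1 poly"
  assumes "degree U < n" "degree V < n" "degree A \<le> n" "degree B \<le> n" "j < 2*n"
  shows "coeff (A*U + B*V) (2*n-1-j) = (transpose_mat (sylvester_mat_sub n n A B) *\<^sub>v vecUV n U V) $ j"
proof -
  let ?S = "sylvester_mat_sub n n A B"
  have "(transpose_mat ?S *\<^sub>v vecUV n U V) $ j = (\<Sum>i<2*n. ?S $$ (i,j) * vecUV n U V $ i)"
    using assms(5) by (simp add: scalar_prod_def vecUV_def atLeast0LessThan mult_2)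
  also have "\<dots> = (\<Sum>i<n. ?S $$ (i,j) * vecUV n U V $ i) + (\<Sum>i<n. ?S $$ (n+i,j) * vecUV n U V $ (n+i))"
    by (simp add: mult_2 sum_split_nat)
  also have "\<dots> = coeff (A*U) (2*n-1-j) + coeff (B*V) (2*n-1-j)"
    unfolding half[OF assms(1,3,5)] half[OF assms(2,4,5)]
    by (intro arg_cong2[where f="(+)"] sum.cong refl)
       (use assms(5) in \<open>auto simp: sylvester_mat_sub_index vecUV_def\<close>)
  finally show ?thesis by simp
qed

lemma mat_inv_ex:
  fixes T :: "'a::comm_ring_1 mat"
  assumes T: "T \<in> carrier_mat m m" and d: "det T dvd 1"
  shows "\<exists>M \<in> carrier_mat m m. T * M = 1\<^sub>m m \<and> M * T = 1\<^sub>m m"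
proof -
  from d obtain e where e0: "1 = det T * e" by (auto elim: dvdE)
  have e: "det T * e = 1" "e * det T = 1" using e0 by (auto simp: mult.commute)
  let ?M = "e \<cdot>\<^sub>m adj_mat T"
  have a: "adj_mat T \<in> carrier_mat m m" using adj_mat[OF T] by auto
  have "T * ?M = e \<cdot>\<^sub>m (T * adj_mat T)" using mult_smult_distrib[OF T a] by simp
  also have "\<dots> = 1\<^sub>m m" unfolding adj_mat(2)[OF T]
    by (rule eq_matI) (auto simp: e)
  finally have 1: "T * ?M = 1\<^sub>m m" .
  have "?M * T = e \<cdot>\<^sub>m (adj_mat T * T)" using mult_smult_assoc_mat[OF a T] by simp
  also have "\<dots> = 1\<^sub>m m" unfolding adj_mat(3)[OF T]
    by (rule eq_matI) (auto simp: e)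
  finally have 2: "?M * T = 1\<^sub>m m" .
  show ?thesis using 1 2 a by (intro bexI[of _ ?M]) auto
qed

lemma T_carrier: "transpose_mat (sylvester_mat_sub n n A B) \<in> carrier_mat (2*n) (2*n)"
  by (auto simp: mult_2)

lemma T_det: "det (transpose_mat (sylvester_mat_sub n n A B)) = resultant_sub n n A B"
  unfolding resultant_sub_def by (rule det_transpose) (auto simp: mult_2)

lemma syl_inj:
  fixes A B U V :: "'a::comm_ring_1 poly"
  assumes "degree U < n" "degree V < n" "degree A \<le> n" "degree B \<le> n"
    and r: "resultant_sub n n A B dvd 1" and eq: "A*U + B*V = 0"
  shows "U = 0 \<and> V = 0"
proof -
  let ?T = "transpose_mat (sylvester_mat_sub n n A B)"
  obtain M where M: "M \<in> carrier_mat (2*n) (2*n)" "M * ?T = 1\<^sub>m (2*n)"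
    using mat_inv_ex[OF T_carrier, of n A B] r T_det by metis
  have x: "vecUV n U V \<in> carrier_vec (2*n)" by (simp add: vecUV_def)
  have Tx: "?T *\<^sub>v vecUV n U V = 0\<^sub>v (2*n)"
  proof (rule eq_vecI)
    fix j assume "j < dim_vec (0\<^sub>v (2*n) :: 'a vec)"
    then have j: "j < 2*n" by simp
    show "(?T *\<^sub>v vecUV n U V) $ j = 0\<^sub>v (2*n) $ j"
      using corr[OF assms(1-4) j] eq j by simp
  qed (simp add: mult_2)
  have "vecUV n U V = (M * ?T) *\<^sub>v vecUV n U V" using M x by simp
  also have "\<dots> = M *\<^sub>v (?T *\<^sub>v vecUV n U V)" using M x T_carrier by (intro assoc_mult_mat_vec) auto
  also have "\<dots> = 0\<^sub>v (2*n)" unfolding Tx using M by auto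
  finally have z: "vecUV n U V = 0\<^sub>v (2*n)" .
  have zi: "\<And>i. i < 2*n \<Longrightarrow> vecUV n U V $ i = 0" using z by simp
  have "U = 0"
  proof (rule poly_eqI)
    fix k show "coeff U k = coeff 0 k"
    proof (cases "k < n")
      case True
      then show ?thesis using zi[of "n-1-k"] by (simp add: vecUV_def)
    next
      case False then show ?thesis using assms(1) by (simp add: coeff_eq_0)
    qed
  qed
  moreover have "V = 0"
  proof (rule poly_eqI)
    fix k show "coeff V k = coeff 0 k"
    proof (cases "k < n")
      case True
      moreover have "\<not> 2*n-1-k < n" "2*n-1-(2*n-1-k) = k" using True by auto
      ultimately show ?thesis using zi[of "2*n-1-k"] by (simp add: vecUV_def)
    next
      case False then show ?thesis using assms(2) by (simp add: coeff_eq_0)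
    qed
  qed
  ultimately show ?thesis by simp
qed

lemma coeff_sum_monom_lt: "coeff (\<Sum>k<n. monom (g k) k) i = (if i < n then g i else 0)"
  by (simp add: coeff_sum coeff_monom)

lemma degree_sum_monom_lt: "n \<ge> 1 \<Longrightarrow> degree (\<Sum>k<n. monom (g k) k) < n"
proof -
  assume n: "n \<ge> 1"
  have "degree (\<Sum>k<n. monom (g k) k) \<le> n - 1"
    by (rule degree_le) (auto simp: coeff_sum_monom_lt)
  then show ?thesis using n by linarith
qed

lemma syl_surj:
  fixes A B W :: "'a::comm_ring_1 poly"
  assumes n: "n \<ge> 1" and dA: "degree A \<le> n" and dB: "degree B \<le> n" and dW: "degree W < 2*n"
    and r: "resultant_sub n n A B dvd 1"
  shows "\<exists>U V. degree U < n \<and> degree V < n \<and> A*U + B*V = W"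
proof -
  let ?T = "transpose_mat (sylvester_mat_sub n n A B)"
  obtain M where M: "M \<in> carrier_mat (2*n) (2*n)" "?T * M = 1\<^sub>m (2*n)"
    using mat_inv_ex[OF T_carrier, of n A B] r T_det by metis
  define c where "c = vec (2*n) (\<lambda>j. coeff W (2*n-1-j))"
  define x where "x = M *\<^sub>v c"
  have c: "c \<in> carrier_vec (2*n)" by (simp add: c_def)
  have Tx: "?T *\<^sub>v x = c"
  proof -
    have "?T *\<^sub>v x = (?T * M) *\<^sub>v c" unfolding x_def using M c T_carrier
      by (intro assoc_mult_mat_vec[symmetric]) auto
    also have "\<dots> = c" using M c by simp
    finally show ?thesis .
  qed
  have xd: "dim_vec x = 2*n" using M by (simp add: x_def)
  define U where "U = (\<Sum>k<n. monom (x $ (n-1-k)) k)"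
  define V where "V = (\<Sum>k<n. monom (x $ (2*n-1-k)) k)"
  have dU: "degree U < n" unfolding U_def by (rule degree_sum_monom_lt[OF n])
  have dV: "degree V < n" unfolding V_def by (rule degree_sum_monom_lt[OF n])
  have vx: "vecUV n U V = x"
    by (rule eq_vecI) (auto simp: vecUV_def xd U_def V_def coeff_sum_monom_lt)
  have "A*U + B*V = W"
  proof (rule poly_eqI)
    fix k show "coeff (A*U + B*V) k = coeff W k"
    proof (cases "k < 2*n")
      case True
      define j where "j = 2*n-1-k"
      have j: "j < 2*n" and kj: "k = 2*n-1-j" using True n by (auto simp: j_def)
      show ?thesis unfolding kj corr[OF dU dV dA dB j] vx Tx using j by (simp add: c_def)
    next
      case False
      have "degree (A*U + B*V) \<le> 2*n - 1"
      proof -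
        have "degree (A*U) \<le> 2*n-1" using degree_mult_le[of A U] dA dU by linarith
        moreover have "degree (B*V) \<le> 2*n-1" using degree_mult_le[of B V] dB dV by linarith
        ultimately show ?thesis using degree_add_le by blast
      qed
      then have "coeff (A*U + B*V) k = 0" using False n by (intro coeff_eq_0) linarith
      moreover have "coeff W k = 0" using False dW by (intro coeff_eq_0) linarith
      ultimately show ?thesis by simp
    qed
  qed
  then show ?thesis using dU dV by blast
qed

lemma res_shift:
  fixes A B :: "'a::comm_ring_1 poly"
  assumes n: "n \<ge> 1"
  shows "resultant_sub n n (A + smult h B) B = resultant_sub n n A B"
proof -
  let ?S = "sylvester_mat_sub n n A B"
  let ?S' = "sylvester_mat_sub n n (A + smult h B) B"
  define E :: "'a mat" where "E = mat (2*n) (2*n) (\<lambda>(i,k). (if i = k then 1 else 0) + (if k = i+n then h else 0))"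
  have Ec: "E \<in> carrier_mat (2*n) (2*n)" by (simp add: E_def)
  have Sc: "?S \<in> carrier_mat (2*n) (2*n)" unfolding mult_2 by (rule sylvester_mat_sub_carrier)
  have ES: "?S' = E * ?S"
  proof (rule eq_matI)
    fix i j assume "i < dim_row (E * ?S)" "j < dim_col (E * ?S)"
    then have i: "i < 2*n" and j: "j < 2*n" using Ec by (auto simp: mult_2)
    have "(E * ?S) $$ (i,j) = (\<Sum>k\<in>{0..<2*n}. E $$ (i,k) * ?S $$ (k,j))"
      using i j Ec by (simp add: scalar_prod_def mult_2)
    also have "\<dots> = (\<Sum>k\<in>{0..<2*n}. (if i = k then ?S $$ (k,j) else 0) + (if k = i+n then h * ?S $$ (k,j) else 0))"
      by (rule sum.cong) (auto simp: E_def i)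
    also have "\<dots> = ?S $$ (i,j) + (if i + n < 2*n then h * ?S $$ (i+n,j) else 0)"
      using i by (simp add: sum.distrib)
    also have "\<dots> = ?S' $$ (i,j)"
      using i j by (auto simp: sylvester_mat_sub_index mult_2 algebra_simps)
    finally show "?S' $$ (i,j) = (E * ?S) $$ (i,j)" by simp
  qed (use Ec in \<open>auto simp: mult_2\<close>)
  have "det E = 1"
  proof -
    have "upper_triangular E" by (auto simp: upper_triangular_def E_def)
    then have "det E = prod_list (diag_mat E)" using det_upper_triangular Ec by blast
    also have "\<dots> = 1" using n by (auto simp: diag_mat_def E_def intro!: prod_list_neutral)
    finally show ?thesis .
  qed
  then show ?thesis unfolding resultant_sub_def ES det_mult[OF Ec Sc] by simp
qed

lemma coeff_top:
  fixes A B U V :: "'a::comm_ring_1 poly"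
  assumes F: "(A,B) \<in> Fn n" and n: "n \<ge> 1" and dU: "degree U \<le> n-1" and dV: "degree V \<le> n-1"
  shows "coeff (A*U + B*V) (2*n-1) = coeff U (n-1)"
proof -
  from F have dA: "degree A = n" and lA: "lead_coeff A = 1" and dB: "degree B < n" by (auto simp: Fn_def)
  have "coeff (B*V) (2*n-1) = 0"
    using degree_mult_le[of B V] dB dV n by (intro coeff_eq_0) linarith
  moreover have "coeff (A*U) (2*n-1) = coeff U (n-1)"
  proof (cases "degree U = n-1")
    case True
    then have "2*n-1 = degree A + degree U" using dA n by simp
    then show ?thesis using coeff_mult_degree_sum[of A U] lA True by simp
  next
    case False
    then have "coeff U (n-1) = 0" using dU by (intro coeff_eq_0) linarith
    moreover have "coeff (A*U) (2*n-1) = 0"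
      using degree_mult_le[of A U] dA dU n False by (intro coeff_eq_0) linarith
    ultimately show ?thesis by simp
  qed
  ultimately show ?thesis by simp
qed

lemma UV_lead:
  fixes A B U V :: "'a::comm_ring_1 poly"
  assumes F: "(A,B) \<in> Fn n" and n: "n \<ge> 1" and UV: "UV_cond n A B U V"
  shows "coeff U (n-1) = 1"
proof -
  from UV have "degree U \<le> n-1" "degree V \<le> n-1" "A*U + B*V = monom 1 (2*n-1)" by (auto simp: UV_cond_def)
  from coeff_top[OF F n this(1,2)] this(3) show ?thesis by simp
qed

lemma UV_ex1:
  fixes A B :: "'a::comm_ring_1 poly"
  assumes F: "(A,B) \<in> Fn n" and n: "n \<ge> 1"
  shows "\<exists>!UV. UV_cond n A B (fst UV) (snd UV)"
proof -
  from F have dA: "degree A = n" and dB: "degree B < n" and r: "resultant_sub n n A B dvd 1"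
    by (auto simp: Fn_def)
  have dW: "degree (monom (1::'a) (2*n-1)) < 2*n" using n by (simp add: degree_monom_eq)
  obtain U V where UV: "degree U < n" "degree V < n" "A*U + B*V = monom 1 (2*n-1)"
    using syl_surj[OF n _ _ dW r] dA dB by fastforce
  have c: "coeff U (n-1) = 1" using coeff_top[OF F n, of U V] UV n by simp
  have "degree U = n-1"
  proof -
    have "degree U \<ge> n-1" using c by (metis le_degree one_neq_zero)
    then show ?thesis using UV n by linarith
  qed
  then have ex: "UV_cond n A B U V" using UV by (auto simp: UV_cond_def)
  show ?thesis
  proof (rule ex1I[of _ "(U,V)"])
    show "UV_cond n A B (fst (U,V)) (snd (U,V))" using ex by simp
  next
    fix UV' assume a: "UV_cond n A B (fst UV') (snd UV')"
    obtain U' V' where UV': "UV' = (U',V')" by force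
    from a UV' have c': "degree U' = n-1" "degree V' \<le> n-1" "A*U' + B*V' = monom 1 (2*n-1)"
      by (auto simp: UV_cond_def)
    have "A*(U'-U) + B*(V'-V) = 0" using c'(3) UV(3) by (simp add: algebra_simps)
    moreover have "degree (U'-U) \<le> n-1" by (rule degree_diff_le) (use c'(1) UV(1) n in linarith)+
    moreover have "degree (V'-V) \<le> n-1" by (rule degree_diff_le) (use c'(2) UV(2) n in linarith)+
    ultimately have "A*(U'-U) + B*(V'-V) = 0" "degree (U'-U) < n" "degree (V'-V) < n" using n by auto
    then have "U'-U = 0 \<and> V'-V = 0" using syl_inj[of "U'-U" n "V'-V" A B] dA dB r by auto
    then show "UV' = (U,V)" using UV' by simp
  qed
qed

lemma phi_eq:
  fixes A B U V :: "'a::comm_ring_1 poly"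
  assumes F: "(A,B) \<in> Fn n" and n: "n \<ge> 1" and UV: "UV_cond n A B U V"
  shows "phi n (A,B) = - coeff V (n-1)"
proof -
  have "(THE UV. UV_cond n A B (fst UV) (snd UV)) = (U,V)"
    by (rule the1_equality[OF UV_ex1[OF F n]]) (simp add: UV)
  then show ?thesis by (simp add: phi_def)
qed

lemma shift_part:
  fixes A B :: "'a::comm_ring_1 poly"
  assumes F: "(A,B) \<in> Fn n" and n: "n \<ge> 1"
  shows "(A + smult h B, B) \<in> Fn n \<and> phi n (A + smult h B, B) = phi n (A, B) + h"
proof -
  from F have dA: "degree A = n" and lA: "lead_coeff A = 1" and dB: "degree B < n"
    and r: "resultant_sub n n A B dvd 1" by (auto simp: Fn_def)
  have d: "degree (A + smult h B) = n"
    using dA dB degree_smult_le[of h B] by (subst degree_add_eq_left) auto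
  have l: "coeff (A + smult h B) n = 1" using lA dA dB by (simp add: coeff_eq_0)
  have F': "(A + smult h B, B) \<in> Fn n"
    using d l dB r res_shift[OF n, of A h B] by (simp add: Fn_def)
  obtain UV where UV: "UV_cond n A B (fst UV) (snd UV)" using UV_ex1[OF F n] by blast
  obtain U V where UVe: "UV = (U,V)" by force
  have c: "UV_cond n A B U V" using UV UVe by simp
  have c': "UV_cond n (A + smult h B) B U (V - smult h U)"
    using c degree_diff_le[of V "n-1" "smult h U"] degree_smult_le[of h U]
    by (auto simp: UV_cond_def algebra_simps)
  have "phi n (A + smult h B, B) = - coeff (V - smult h U) (n-1)" by (rule phi_eq[OF F' n c'])
  also have "\<dots> = - coeff V (n-1) + h" using UV_lead[OF F n c] by simp
  also have "\<dots> = phi n (A,B) + h" using phi_eq[OF F n c] by simp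
  finally show ?thesis using F' by simp
qed

lemma phi_shift: "(A,B) \<in> Fn n \<Longrightarrow> n \<ge> 1 \<Longrightarrow> phi n (A + smult h B, B) = phi n (A,B) + h"
  using shift_part by blast
lemma Fn_shift: "(A,B) \<in> Fn n \<Longrightarrow> n \<ge> 1 \<Longrightarrow> (A + smult h B, B) \<in> Fn n"
  using shift_part by blast
lemma phi_shift': "(A,B) \<in> Fn n \<Longrightarrow> n \<ge> 1 \<Longrightarrow> phi n (A - smult h B, B) = phi n (A,B) - h"
  using phi_shift[of A B n "-h"] by simp
lemma Fn_shift': "(A,B) \<in> Fn n \<Longrightarrow> n \<ge> 1 \<Longrightarrow> (A - smult h B, B) \<in> Fn n"
  using Fn_shift[of A B n "-h"] by simp

lemma (in comm_ring_hom) hom_part: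
  fixes A B :: "'a poly"
  assumes F: "(A,B) \<in> Fn n" and n: "n \<ge> 1"
  shows "(map_poly hom A, map_poly hom B) \<in> Fn n \<and> phi n (map_poly hom A, map_poly hom B) = hom (phi n (A, B))"
proof -
  interpret mh: map_poly_comm_ring_hom hom ..
  from F have dA: "degree A = n" and lA: "lead_coeff A = 1" and dB: "degree B < n"
    and r: "resultant_sub n n A B dvd 1" by (auto simp: Fn_def)
  have dA': "degree (map_poly hom A) = n"
  proof -
    have "coeff (map_poly hom A) n = 1" using lA dA by simp
    then have "degree (map_poly hom A) \<ge> n" by (metis le_degree one_neq_zero)
    then show ?thesis using degree_map_poly_le[of hom A] dA by linarith
  qed
  have lA': "lead_coeff (map_poly hom A) = 1" using dA' lA dA by simp
  have dB': "degree (map_poly hom B) < n" using degree_map_poly_le[of hom B] dB by linarith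
  have "resultant_sub n n (map_poly hom A) (map_poly hom B) = hom (resultant_sub n n A B)"
    unfolding resultant_sub_def sylvester_mat_sub_map[of hom, OF hom_zero, symmetric] by simp
  then have r': "resultant_sub n n (map_poly hom A) (map_poly hom B) dvd 1" using r by simp
  have F': "(map_poly hom A, map_poly hom B) \<in> Fn n" using dA' lA' dB' r' by (simp add: Fn_def)
  obtain UV where UV: "UV_cond n A B (fst UV) (snd UV)" using UV_ex1[OF F n] by blast
  obtain U V where UVe: "UV = (U,V)" by force
  have c: "UV_cond n A B U V" using UV UVe by simp
  have lU: "coeff U (n-1) = 1" by (rule UV_lead[OF F n c])
  have dU': "degree (map_poly hom U) = n-1"
  proof -
    have "coeff (map_poly hom U) (n-1) = 1" using lU by simp
    then have "degree (map_poly hom U) \<ge> n-1" by (metis le_degree one_neq_zero)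
    then show ?thesis using degree_map_poly_le[of hom U] c by (auto simp: UV_cond_def)
  qed
  have c': "UV_cond n (map_poly hom A) (map_poly hom B) (map_poly hom U) (map_poly hom V)"
  proof -
    have "map_poly hom (A*U + B*V) = map_poly hom (monom 1 (2*n-1))" using c by (simp add: UV_cond_def)
    then have "map_poly hom A * map_poly hom U + map_poly hom B * map_poly hom V = monom 1 (2*n-1)"
      by (simp add: hom_distribs)
    then show ?thesis using dU' c degree_map_poly_le[of hom V] by (auto simp: UV_cond_def)
  qed
  have "phi n (map_poly hom A, map_poly hom B) = - coeff (map_poly hom V) (n-1)" by (rule phi_eq[OF F' n c'])
  also have "\<dots> = hom (phi n (A,B))" using phi_eq[OF F n c] by (simp add: hom_distribs)
  finally show ?thesis using F' by simp
qed

theorem lemma3p18: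
  fixes n :: nat
  assumes "n \<ge> 1"
  shows
    "(\<forall>(A, B) \<in> (Fn n :: ('a::comm_ring_1 poly \<times> 'a poly) set).
        \<exists>!(U, V). UV_cond n A B U V)
   \<and> (\<forall>(A, B) \<in> (Fn n :: ('a::comm_ring_1 poly \<times> 'a poly) set). \<forall>h :: 'a.
        (A + smult h B, B) \<in> Fn n \<and> phi n (A + smult h B, B) = phi n (A, B) + h)
   \<and> (\<forall>f :: 'a \<Rightarrow> 'b::comm_ring_1.
        (f 1 = 1 \<and> (\<forall>x y. f (x + y) = f x + f y) \<and> (\<forall>x y. f (x * y) = f x * f y)) \<longrightarrow>
        (\<forall>(A, B) \<in> (Fn n :: ('a poly \<times> 'a poly) set).
           (map_poly f A, map_poly f B) \<in> Fn n
           \<and> phi n (map_poly f A, map_poly f B) = f (phi n (A, B))))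
   \<and> bij_betw (\<lambda>(A, B). ((A - smult (phi n (A, B)) B, B), phi n (A, B)))
        (Fn n :: ('a poly \<times> 'a poly) set)
        ({x \<in> Fn n. phi n x = 0} \<times> (UNIV :: 'a set))"
proof (intro conjI)
  show "\<forall>(A, B) \<in> (Fn n :: ('a::comm_ring_1 poly \<times> 'a poly) set). \<exists>!(U, V). UV_cond n A B U V"
  proof (intro ballI, clarify)
    fix A B :: "'a poly" assume F: "(A,B) \<in> Fn n"
    from UV_ex1[OF F assms] show "\<exists>!(U, V). UV_cond n A B U V" unfolding case_prod_beta .
  qed
  show "\<forall>(A, B) \<in> (Fn n :: ('a::comm_ring_1 poly \<times> 'a poly) set). \<forall>h :: 'a.
        (A + smult h B, B) \<in> Fn n \<and> phi n (A + smult h B, B) = phi n (A, B) + h"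
    using shift_part[OF _ assms] by blast
  show "\<forall>f :: 'a \<Rightarrow> 'b::comm_ring_1.
        (f 1 = 1 \<and> (\<forall>x y. f (x + y) = f x + f y) \<and> (\<forall>x y. f (x * y) = f x * f y)) \<longrightarrow>
        (\<forall>(A, B) \<in> (Fn n :: ('a poly \<times> 'a poly) set).
           (map_poly f A, map_poly f B) \<in> Fn n
           \<and> phi n (map_poly f A, map_poly f B) = f (phi n (A, B)))"
  proof (intro allI impI)
    fix f :: "'a \<Rightarrow> 'b"
    assume h: "f 1 = 1 \<and> (\<forall>x y. f (x + y) = f x + f y) \<and> (\<forall>x y. f (x * y) = f x * f y)"
    have f0: "f 0 = 0"
    proof -
      have "f 0 = f (0 + 0)" by simp
      also have "\<dots> = f 0 + f 0" using h by blast
      finally show ?thesis by simp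
    qed
    interpret comm_ring_hom f by unfold_locales (use h f0 in auto)
    show "\<forall>(A, B) \<in> (Fn n :: ('a poly \<times> 'a poly) set).
           (map_poly f A, map_poly f B) \<in> Fn n
           \<and> phi n (map_poly f A, map_poly f B) = f (phi n (A, B))"
      using hom_part[OF _ assms] by blast
  qed
  show "bij_betw (\<lambda>(A, B). ((A - smult (phi n (A, B)) B, B), phi n (A, B)))
        (Fn n :: ('a poly \<times> 'a poly) set)
        ({x \<in> Fn n. phi n x = 0} \<times> (UNIV :: 'a set))"
  proof (rule bij_betw_byWitness[where f' = "\<lambda>((A, B), t). (A + smult t B, B)"])
    show "\<forall>a\<in>Fn n. (\<lambda>((A, B), t). (A + smult t B, B)) ((\<lambda>(A, B). ((A - smult (phi n (A, B)) B, B), phi n (A, B))) a) = a"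
      by auto
    show "\<forall>a'\<in>{x \<in> Fn n. phi n x = 0} \<times> UNIV. (\<lambda>(A, B). ((A - smult (phi n (A, B)) B, B), phi n (A, B))) ((\<lambda>((A, B), t). (A + smult t B, B)) a') = a'"
      using assms by (auto simp: phi_shift)
    show "(\<lambda>(A, B). ((A - smult (phi n (A, B)) B, B), phi n (A, B))) ` Fn n \<subseteq> {x \<in> Fn n. phi n x = 0} \<times> UNIV"
      using assms by (auto simp: phi_shift' Fn_shift')
    show "(\<lambda>((A, B), t). (A + smult t B, B)) ` ({x \<in> Fn n. phi n x = 0} \<times> UNIV) \<subseteq> Fn n"
      using shift_part[OF _ assms] by auto
  qed
qed
end
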